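(* Let $n,t\ge1$, $q\ge 2$, $b\ge1$ and $\boldsymbol{x}=x_1\cdots x_n\in\Sigma_q^n$. Then $\mathcal{I}_{t,b}(\boldsymbol{x})$ is the disjoint union $\bigsqcup_{\alpha\in\Sigma_q}\mathcal{I}_{t,b}(\boldsymbol{x})^{\alpha}$, where \[ \mathcal{I}_{t,b}(\boldsymbol{x})^{x_1}=x_1\circ\mathcal{I}_{t,b}(x_2\cdots x_n),\qquad \mathcal{I}_{t,b}(\boldsymbol{x})^{\alpha}=\alpha\circ\Sigma_q^{b-1}\circ\mathcal{I}_{t-1,b}(\boldsymbol{x})\ \text{ for }\alpha\in\Sigma_q\setminus\{x_1\}. \]
   Context: $\Sigma_q=\{0,\ldots,q-1\}$. A $b$-burst-insertion at position $i\in[1,n+1]$ transforms $x_1\cdots x_n$ into $x_1\cdots x_{i-1}y_1\cdots y_b x_i\cdots x_n$ for arbitrary $y_1\cdots y_b\in\Sigma_q^b$. $\mathcal{I}_{t,b}(\boldsymbol{x})$ is the set of all length-$(n+tb)$ sequences obtainable from $\boldsymbol{x}$ by $t$ successive $b$-burst-insertions ($\mathcal{I}_{0,b}(\boldsymbol{x})=\{\boldsymbol{x}\}$; for the empty sequence, $\mathcal{I}_{t,b}=\Sigma_q^{tb}$). For a set $\mathcal{S}$ of sequences, $\mathcal{S}^{\boldsymbol{u}}$ is the set of sequences in $\mathcal{S}$ starting with $\boldsymbol{u}$; $\circ$ denotes concatenation, extended to sets elementwise. *)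

theory Defs
  imports Main "HOL-Library.Sublist"
begin

definition seqs :: "nat \<Rightarrow> nat \<Rightarrow> nat list set" where
  "seqs q n = {xs. length xs = n \<and> set xs \<subseteq> {..<q}}"

text \<open>All results of one b-burst-insertion into xs (insertion before the (i+1)-th symbol,
  i = 0..length xs, i.e. positions 1..n+1 of the paper).\<close>
definition burst_ins :: "nat \<Rightarrow> nat \<Rightarrow> nat list \<Rightarrow> nat list set" where
  "burst_ins q b xs = {take i xs @ ys @ drop i xs | i ys. i \<le> length xs \<and> ys \<in> seqs q b}"

fun ins_ball :: "nat \<Rightarrow> nat \<Rightarrow> nat \<Rightarrow> nat list \<Rightarrow> nat list set" where
  "ins_ball q 0 b xs = {xs}"
| "ins_ball q (Suc t) b xs = (\<Union>ys \<in> ins_ball q t b xs. burst_ins q b ys)"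

text \<open>S^u: the sequences of S starting with u.\<close>
definition starting :: "nat list set \<Rightarrow> nat list \<Rightarrow> nat list set" where
  "starting S u = {s \<in> S. prefix u s}"

definition conc :: "nat list set \<Rightarrow> nat list set \<Rightarrow> nat list set" where
  "conc A B = {a @ c | a c. a \<in> A \<and> c \<in> B}"

end

theory Submission
  imports Defs
begin

lemma burst_ins_iff:
  "v \<in> burst_ins q b u \<longleftrightarrow> (\<exists>i ys. v = take i u @ ys @ drop i u \<and> i \<le> length u \<and> ys \<in> seqs q b)"
  by (auto simp: burst_ins_def)

lemma ins_inv:
  "set x \<subseteq> {..<q} \<Longrightarrow> y \<in> ins_ball q t b x \<Longrightarrow> length y = length x + t*b \<and> set y \<subseteq> {..<q}"
proof (induction t arbitrary: y)
  case 0 then show ?case by simp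
next
  case (Suc t)
  then obtain u where u: "u \<in> ins_ball q t b x" "y \<in> burst_ins q b u" by auto
  then obtain i ys where y: "y = take i u @ ys @ drop i u" "i \<le> length u" "ys \<in> seqs q b"
    by (auto simp: burst_ins_iff)
  have "length u = length x + t*b \<and> set u \<subseteq> {..<q}" using Suc u by blast
  then show ?case using y set_take_subset[of i u] set_drop_subset[of i u]
    by (auto simp: seqs_def)
qed

lemma ins_step: "u \<in> ins_ball q t b x \<Longrightarrow> v \<in> burst_ins q b u \<Longrightarrow> v \<in> ins_ball q (Suc t) b x"
  by auto

lemma ins_trans: "u \<in> ins_ball q r b x \<Longrightarrow> v \<in> ins_ball q s b u \<Longrightarrow> v \<in> ins_ball q (s+r) b x"
proof (induction s arbitrary: v)
  case 0 then show ?case by simp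
next
  case (Suc s) then show ?case by auto
qed

lemma ins_prefix: "w \<in> ins_ball q s b x \<Longrightarrow> p @ w \<in> ins_ball q s b (p @ x)"
proof (induction s arbitrary: w)
  case 0 then show ?case by simp
next
  case (Suc s)
  then obtain u where u: "u \<in> ins_ball q s b x" "w \<in> burst_ins q b u" by auto
  then obtain i ys where y: "w = take i u @ ys @ drop i u" "i \<le> length u" "ys \<in> seqs q b"
    by (auto simp: burst_ins_iff)
  have "p @ w = take (i + length p) (p @ u) @ ys @ drop (i + length p) (p @ u)"
    using y by simp
  then have "p @ w \<in> burst_ins q b (p @ u)" using y unfolding burst_ins_iff
    by (metis add_le_mono le_refl length_append add.commute)
  moreover have "p @ u \<in> ins_ball q s b (p @ x)" using Suc u by blast
  ultimately show ?case by auto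
qed

lemma lemL:
  assumes "length v = b - 1" "set v \<subseteq> {..<q}" "a < q" "b \<ge> 1"
    "w \<in> ins_ball q s b (a # xs)"
  shows "v @ w \<in> ins_ball q (Suc s) b xs"
proof -
  have "v @ [a] \<in> seqs q b" using assms by (auto simp: seqs_def)
  then have "v @ a # xs \<in> burst_ins q b xs" unfolding burst_ins_iff
    by (metis append.assoc append_Cons append_Nil drop0 le0 take0)
  then have "v @ a # xs \<in> ins_ball q 1 b xs" by simp
  moreover have "v @ w \<in> ins_ball q s b (v @ a # xs)" using ins_prefix[OF assms(5)] by simp
  ultimately show ?thesis using ins_trans by fastforce
qed


lemma main:
  assumes b: "b \<ge> 1" and xq: "set (a # xs) \<subseteq> {..<q}"
  shows "y \<in> ins_ball q t b (a # xs) \<Longrightarrow> (\<exists>c y'. y = c # y' \<and> (c = a \<longrightarrow> y' \<in> ins_ball q t b xs)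
     \<and> (c \<noteq> a \<longrightarrow> t \<ge> 1 \<and> (\<exists>z w. y' = z @ w \<and> length z = b - 1 \<and> w \<in> ins_ball q (t - 1) b (a # xs))))"
proof (induction t arbitrary: y)
  case 0 then show ?case by simp
next
  case (Suc t)
  then obtain u where u: "u \<in> ins_ball q t b (a # xs)" "y \<in> burst_ins q b u" by auto
  then obtain i ys where y: "y = take i u @ ys @ drop i u" "i \<le> length u" "ys \<in> seqs q b"
    by (auto simp: burst_ins_iff)
  from Suc.IH[OF u(1)] obtain d u' where du: "u = d # u'"
    "d = a \<longrightarrow> u' \<in> ins_ball q t b xs"
    "d \<noteq> a \<longrightarrow> t \<ge> 1 \<and> (\<exists>z w. u' = z @ w \<and> length z = b - 1 \<and> w \<in> ins_ball q (t - 1) b (a # xs))"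
    by blast
  have uq: "set u \<subseteq> {..<q}" using ins_inv[OF xq u(1)] by blast
  have aq: "a < q" using xq by auto
  show ?case
  proof (cases "i = 0")
    case True
    obtain c zs where ys: "ys = c # zs" using y(3) b by (cases ys) (auto simp: seqs_def)
    have zs: "length zs = b - 1" "set zs \<subseteq> {..<q}" using y(3) ys by (auto simp: seqs_def)
    have yy: "y = c # (zs @ u)" using y True ys by simp
    show ?thesis
      using yy lemL[OF zs aq b u(1)] zs u(1) by auto
  next
    case False
    then obtain j where j: "i = Suc j" by (cases i) auto
    have yy: "y = d # (take j u' @ ys @ drop j u')" using y j du by simp
    have jl: "j \<le> length u'" using y j du by simp
    have bi: "take j u' @ ys @ drop j u' \<in> burst_ins q b u'" using jl y(3) unfolding burst_ins_iff by blast
    show ?thesis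
    proof (cases "d = a")
      case True
      then show ?thesis using yy bi du(2) ins_step by blast
    next
      case False
      then obtain z w where zw: "t \<ge> 1" "u' = z @ w" "length z = b - 1" "w \<in> ins_ball q (t - 1) b (a # xs)"
        using du(3) by blast
      have zq: "set z \<subseteq> {..<q}" using uq du zw by auto
      have tt: "Suc (t - 1) = t" using zw by simp
      have "\<exists>z' w'. take j u' @ ys @ drop j u' = z' @ w' \<and> length z' = b - 1 \<and> w' \<in> ins_ball q t b (a # xs)"
      proof (cases "j \<ge> b - 1")
        case True
        define k where "k = j - (b - 1)"
        have e: "take j u' @ ys @ drop j u' = z @ (take k w @ ys @ drop k w)"
          using zw True k_def by simp
        have "take k w @ ys @ drop k w \<in> burst_ins q b w"
          using jl zw k_def y(3) True unfolding burst_ins_iff by (intro exI[of _ k] exI[of _ ys]) auto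
        then have "take k w @ ys @ drop k w \<in> ins_ball q t b (a # xs)"
          using ins_step[OF zw(4)] tt by metis
        then show ?thesis using e zw by blast
      next
        case False
        define p where "p = take j z @ ys"
        have lp: "length p \<ge> b - 1" using p_def y(3) by (auto simp: seqs_def)
        have e: "take j u' @ ys @ drop j u' = take (b - 1) p @ ((drop (b - 1) p @ drop j z) @ w)"
          using zw False p_def by simp
        have bs: "drop (b - 1) p @ drop j z \<in> seqs q b"
          using y(3) zw False p_def zq set_drop_subset[of j z] set_take_subset[of j z]
            set_drop_subset[of "b-1" p]
          by (auto simp: seqs_def dest: in_set_dropD)
        have "(drop (b - 1) p @ drop j z) @ w \<in> burst_ins q b w"
          using bs unfolding burst_ins_iff by (intro exI[of _ 0]) auto
        then have "(drop (b - 1) p @ drop j z) @ w \<in> ins_ball q t b (a # xs)"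
          using ins_step[OF zw(4)] tt by metis
        then show ?thesis using e lp
          by (intro exI[of _ "take (b - 1) p"] exI[of _ "(drop (b - 1) p @ drop j z) @ w"]) auto
      qed
      then show ?thesis using yy False zw by auto
    qed
  qed
qed

theorem claim1:
  fixes q n t b :: nat and x :: "nat list"
  assumes "n \<ge> 1" and "t \<ge> 1" and "q \<ge> 2" and "b \<ge> 1"
    and "x \<in> seqs q n"
  shows "ins_ball q t b x = (\<Union>\<alpha> \<in> {..<q}. starting (ins_ball q t b x) [\<alpha>])
    \<and> (\<forall>\<alpha> \<in> {..<q}. \<forall>\<beta> \<in> {..<q}. \<alpha> \<noteq> \<beta> \<longrightarrow>
          starting (ins_ball q t b x) [\<alpha>] \<inter> starting (ins_ball q t b x) [\<beta>] = {})
    \<and> starting (ins_ball q t b x) [hd x] = conc {[hd x]} (ins_ball q t b (tl x))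
    \<and> (\<forall>\<alpha> \<in> {..<q} - {hd x}. starting (ins_ball q t b x) [\<alpha>]
          = conc {[\<alpha>]} (conc (seqs q (b - 1)) (ins_ball q (t - 1) b x)))"
proof -
  obtain a xs where x: "x = a # xs" using assms(1,5) by (cases x) (auto simp: seqs_def)
  have xq: "set (a # xs) \<subseteq> {..<q}" using assms(5) x by (auto simp: seqs_def)
  note M = main[OF assms(4) xq]
  have P1: "ins_ball q t b x = (\<Union>\<alpha> \<in> {..<q}. starting (ins_ball q t b x) [\<alpha>])"
  proof
    show "ins_ball q t b x \<subseteq> (\<Union>\<alpha> \<in> {..<q}. starting (ins_ball q t b x) [\<alpha>])"
    proof
      fix y assume y: "y \<in> ins_ball q t b x"
      then obtain c y' where "y = c # y'" using M x by blast
      moreover have "set y \<subseteq> {..<q}" using ins_inv[OF xq] y x by blast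
      ultimately show "y \<in> (\<Union>\<alpha> \<in> {..<q}. starting (ins_ball q t b x) [\<alpha>])"
        using y by (auto simp: starting_def)
    qed
  qed (auto simp: starting_def)
  have P2: "\<forall>\<alpha> \<in> {..<q}. \<forall>\<beta> \<in> {..<q}. \<alpha> \<noteq> \<beta> \<longrightarrow>
          starting (ins_ball q t b x) [\<alpha>] \<inter> starting (ins_ball q t b x) [\<beta>] = {}"
    by (auto simp: starting_def prefix_def)
  have P3: "starting (ins_ball q t b x) [hd x] = conc {[hd x]} (ins_ball q t b (tl x))"
  proof
    show "starting (ins_ball q t b x) [hd x] \<subseteq> conc {[hd x]} (ins_ball q t b (tl x))"
    proof
      fix y assume "y \<in> starting (ins_ball q t b x) [hd x]"
      then have y: "y \<in> ins_ball q t b x" "prefix [a] y" using x by (auto simp: starting_def)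
      then obtain c y' where "y = c # y'" "c = a \<longrightarrow> y' \<in> ins_ball q t b xs" using M x by blast
      then show "y \<in> conc {[hd x]} (ins_ball q t b (tl x))" using y(2) x by (auto simp: conc_def)
    qed
  next
    show "conc {[hd x]} (ins_ball q t b (tl x)) \<subseteq> starting (ins_ball q t b x) [hd x]"
      using ins_prefix[of _ q t b xs "[a]"] x by (auto simp: conc_def starting_def)
  qed
  have P4: "\<forall>\<alpha> \<in> {..<q} - {hd x}. starting (ins_ball q t b x) [\<alpha>]
          = conc {[\<alpha>]} (conc (seqs q (b - 1)) (ins_ball q (t - 1) b x))"
  proof
    fix \<alpha> assume al: "\<alpha> \<in> {..<q} - {hd x}"
    show "starting (ins_ball q t b x) [\<alpha>] = conc {[\<alpha>]} (conc (seqs q (b - 1)) (ins_ball q (t - 1) b x))"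
    proof
      show "starting (ins_ball q t b x) [\<alpha>] \<subseteq> conc {[\<alpha>]} (conc (seqs q (b - 1)) (ins_ball q (t - 1) b x))"
      proof
        fix y assume "y \<in> starting (ins_ball q t b x) [\<alpha>]"
        then have y: "y \<in> ins_ball q t b x" "prefix [\<alpha>] y" by (auto simp: starting_def)
        then obtain c y' where cy: "y = c # y'"
          "c \<noteq> a \<longrightarrow> t \<ge> 1 \<and> (\<exists>z w. y' = z @ w \<and> length z = b - 1 \<and> w \<in> ins_ball q (t - 1) b (a # xs))"
          using M x by blast
        have c: "c = \<alpha>" using y(2) cy by simp
        then obtain z w where zw: "y' = z @ w" "length z = b - 1" "w \<in> ins_ball q (t - 1) b x"
          using cy al x by auto
        have "set y \<subseteq> {..<q}" using ins_inv[OF xq] y x by blast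
        then have "z \<in> seqs q (b - 1)" using zw cy by (auto simp: seqs_def)
        then show "y \<in> conc {[\<alpha>]} (conc (seqs q (b - 1)) (ins_ball q (t - 1) b x))"
          using zw cy c unfolding conc_def by auto
      qed
    next
      show "conc {[\<alpha>]} (conc (seqs q (b - 1)) (ins_ball q (t - 1) b x)) \<subseteq> starting (ins_ball q t b x) [\<alpha>]"
      proof
        fix y assume "y \<in> conc {[\<alpha>]} (conc (seqs q (b - 1)) (ins_ball q (t - 1) b x))"
        then obtain z w where zw: "y = \<alpha> # z @ w" "z \<in> seqs q (b - 1)" "w \<in> ins_ball q (t - 1) b x"
          by (auto simp: conc_def)
        have "\<alpha> # z \<in> seqs q b" using zw(2) al assms(4) by (auto simp: seqs_def)
        then have "y \<in> burst_ins q b w" unfolding burst_ins_iff using zw(1)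
          by (intro exI[of _ 0] exI[of _ "\<alpha> # z"]) auto
        then have "y \<in> ins_ball q (Suc (t - 1)) b x" using ins_step[OF zw(3)] by blast
        then show "y \<in> starting (ins_ball q t b x) [\<alpha>]" using assms(2) zw(1)
          by (auto simp: starting_def)
      qed
    qed
  qed
  show ?thesis using P1 P2 P3 P4 by blast
qed

end
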